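(* Let $D_6=\langle\sigma,\tau\mid\sigma^6=\tau^2=1,\ \tau\sigma\tau^{-1}=\sigma^{-1}\rangle$ be the dihedral group of order $12$. Let $C_2^{(1)}=\langle\sigma^3\rangle$, $C_2^{(2)}=\langle\tau\rangle$, $C_2^{(3)}=\langle\sigma\tau\rangle$, $C_3=\langle\sigma^2\rangle$, $V_4=\langle\sigma^3,\tau\rangle$, $C_6=\langle\sigma\rangle$, $S_3^{(1)}=\langle\sigma^2,\tau\rangle$, $S_3^{(2)}=\langle\sigma^2,\sigma\tau\rangle$ (representatives of the conjugacy classes of nontrivial proper subgroups of $D_6$). Then there is an isomorphism of permutation $D_6$-lattices $\mathbb{Z}[D_6]\oplus\mathbb{Z}[D_6/V_4]^{\oplus2}\oplus\mathbb{Z}[D_6/C_6]\oplus\mathbb{Z}[D_6/S_3^{(1)}]\oplus\mathbb{Z}[D_6/S_3^{(2)}]\ \simeq\ \mathbb{Z}[D_6/C_2^{(1)}]\oplus\mathbb{Z}[D_6/C_2^{(2)}]\oplus\mathbb{Z}[D_6/C_2^{(3)}]\oplus\mathbb{Z}[D_6/C_3]\oplus\mathbb{Z}^{\oplus2}.$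
   Context: For a subgroup $H$ of a finite group $G$, $\mathbb{Z}[G/H]$ is the permutation $\mathbb{Z}[G]$-module with $\mathbb{Z}$-basis the left cosets $gH$, permuted by left multiplication; $\mathbb{Z}=\mathbb{Z}[G/G]$ is the trivial module. *)

theory Defs
  imports "HOL-Algebra.Algebra"
begin

text \<open>Elements are pairs (a, e) standing for sigma^a tau^e, with a in {0..5}, e a boolean.
  Multiplication: sigma^a tau^s * sigma^b tau^t = sigma^(a + (-1)^s b) tau^(s+t).\<close>

definition d6_mult :: "nat \<times> bool \<Rightarrow> nat \<times> bool \<Rightarrow> nat \<times> bool" where
  "d6_mult x y = (case x of (a, s) \<Rightarrow> case y of (b, t) \<Rightarrow>
      ((if s then a + 6 - b mod 6 else a + b) mod 6, s \<noteq> t))"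

definition D6 :: "(nat \<times> bool) monoid" where
  "D6 = \<lparr>carrier = {0..<6} \<times> UNIV, monoid.mult = d6_mult, one = (0, False)\<rparr>"

definition d6_sigma :: "nat \<times> bool" where "d6_sigma = (1, False)"
definition d6_tau :: "nat \<times> bool" where "d6_tau = (0, True)"

definition lcosets_set :: "('a, 'b) monoid_scheme \<Rightarrow> 'a set \<Rightarrow> 'a set set" where
  "lcosets_set G H = (\<lambda>g. l_coset G g H) ` carrier G"

definition perm_gset :: "('a, 'b) monoid_scheme \<Rightarrow> 'a set list \<Rightarrow> (nat \<times> 'a set) set" where
  "perm_gset G Hs = {(i, C). i < length Hs \<and> C \<in> lcosets_set G (Hs ! i)}"

text \<open>The free Z-module on this (finite) G-set: integer-valued functions supported on it;
  the basis element of a point x is the indicator of x.\<close>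
definition perm_lattice :: "('a, 'b) monoid_scheme \<Rightarrow> 'a set list \<Rightarrow> ((nat \<times> 'a set) \<Rightarrow> int) set" where
  "perm_lattice G Hs = {f. \<forall>x. x \<notin> perm_gset G Hs \<longrightarrow> f x = 0}"

text \<open>G acts by (g.f)(i, C) = f(i, g^-1 C), so that g sends the basis element of (i, C) to that of (i, gC).\<close>
definition perm_act :: "('a, 'b) monoid_scheme \<Rightarrow> 'a set list \<Rightarrow> 'a \<Rightarrow> ((nat \<times> 'a set) \<Rightarrow> int) \<Rightarrow> ((nat \<times> 'a set) \<Rightarrow> int)" where
  "perm_act G Hs g f = (\<lambda>(i, C). if (i, C) \<in> perm_gset G Hs then f (i, l_coset G (inv\<^bsub>G\<^esub> g) C) else 0)"

text \<open>Isomorphism of Z[G]-modules: additive (hence Z-linear) G-equivariant bijection.\<close>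
definition perm_lattice_iso :: "('a, 'b) monoid_scheme \<Rightarrow> 'a set list \<Rightarrow> 'a set list \<Rightarrow> bool" where
  "perm_lattice_iso G Hs Ks = (\<exists>\<phi>.
      bij_betw \<phi> (perm_lattice G Hs) (perm_lattice G Ks)
    \<and> (\<forall>f \<in> perm_lattice G Hs. \<forall>f' \<in> perm_lattice G Hs. \<phi> (\<lambda>x. f x + f' x) = (\<lambda>y. \<phi> f y + \<phi> f' y))
    \<and> (\<forall>g \<in> carrier G. \<forall>f \<in> perm_lattice G Hs. \<phi> (perm_act G Hs g f) = perm_act G Ks g (\<phi> f)))"

end

theory Submission
  imports Defs
begin


definition pact :: "('a,'b) monoid_scheme \<Rightarrow> 'a \<Rightarrow> nat \<times> 'a set \<Rightarrow> nat \<times> 'a set" where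
  "pact G g p = (fst p, l_coset G g (snd p))"

definition kmap :: "('a,'b) monoid_scheme \<Rightarrow> 'a set list \<Rightarrow> 'a set list
   \<Rightarrow> ((nat \<times> 'a set) \<Rightarrow> (nat \<times> 'a set) \<Rightarrow> int) \<Rightarrow> ((nat \<times> 'a set) \<Rightarrow> int) \<Rightarrow> ((nat \<times> 'a set) \<Rightarrow> int)" where
  "kmap G Hs Ks K f = (\<lambda>y. if y \<in> perm_gset G Ks then \<Sum>x\<in>perm_gset G Hs. K y x * f x else 0)"

lemma perm_act_pact:
  "perm_act G Hs g f p = (if p \<in> perm_gset G Hs then f (pact G (inv\<^bsub>G\<^esub> g) p) else 0)"
  by (cases p) (simp add: perm_act_def pact_def)

lemma perm_gsetE:
  assumes "p \<in> perm_gset G Hs"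
  obtains i h where "p = (i, l_coset G h (Hs ! i))" "i < length Hs" "h \<in> carrier G"
  using assms unfolding perm_gset_def lcosets_set_def by auto

lemma perm_gsetI:
  "i < length Hs \<Longrightarrow> h \<in> carrier G \<Longrightarrow> (i, l_coset G h (Hs ! i)) \<in> perm_gset G Hs"
  unfolding perm_gset_def lcosets_set_def by auto

context group begin

lemma pact_closed:
  assumes HS: "\<forall>H\<in>set Hs. subgroup H G" and g: "g \<in> carrier G" and p: "p \<in> perm_gset G Hs"
  shows "pact G g p \<in> perm_gset G Hs"
proof -
  obtain i h where p: "p = (i, h <# (Hs ! i))" "i < length Hs" "h \<in> carrier G"
    using p by (rule perm_gsetE)
  have "Hs ! i \<subseteq> carrier G" using HS p(2) by (simp add: subgroup.subset)
  then have "pact G g p = (i, (g \<otimes> h) <# (Hs ! i))"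
    using p g by (simp add: pact_def lcos_m_assoc)
  then show ?thesis using p g by (simp add: perm_gsetI)
qed

lemma pact_mult:
  assumes HS: "\<forall>H\<in>set Hs. subgroup H G" and g: "g \<in> carrier G" and g': "g' \<in> carrier G"
    and p: "p \<in> perm_gset G Hs"
  shows "pact G g (pact G g' p) = pact G (g \<otimes> g') p"
proof -
  obtain i h where p: "p = (i, h <# (Hs ! i))" "i < length Hs" "h \<in> carrier G"
    using p by (rule perm_gsetE)
  have "Hs ! i \<subseteq> carrier G" using HS p(2) by (simp add: subgroup.subset)
  then show ?thesis using p g g' by (simp add: pact_def lcos_m_assoc m_assoc)
qed

lemma pact_one:
  assumes HS: "\<forall>H\<in>set Hs. subgroup H G" and p: "p \<in> perm_gset G Hs"
  shows "pact G \<one> p = p"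
proof -
  obtain i h where p: "p = (i, h <# (Hs ! i))" "i < length Hs" "h \<in> carrier G"
    using p by (rule perm_gsetE)
  have "Hs ! i \<subseteq> carrier G" using HS p(2) by (simp add: subgroup.subset)
  then show ?thesis using p by (simp add: pact_def lcos_m_assoc)
qed

lemma pact_bij:
  assumes HS: "\<forall>H\<in>set Hs. subgroup H G" and g: "g \<in> carrier G"
  shows "bij_betw (pact G g) (perm_gset G Hs) (perm_gset G Hs)"
proof (rule bij_betw_byWitness[where f' = "pact G (inv g)"])
  show "\<forall>a\<in>perm_gset G Hs. pact G (inv g) (pact G g a) = a"
    using HS g by (simp add: pact_mult pact_one)
  show "\<forall>a\<in>perm_gset G Hs. pact G g (pact G (inv g) a) = a"
    using HS g by (simp add: pact_mult pact_one)
  show "pact G g ` perm_gset G Hs \<subseteq> perm_gset G Hs"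
    using HS g pact_closed by blast
  show "pact G (inv g) ` perm_gset G Hs \<subseteq> perm_gset G Hs"
    using HS g pact_closed by blast
qed

lemma finite_perm_gset:
  assumes "finite (carrier G)" and HS: "\<forall>H\<in>set Hs. subgroup H G"
  shows "finite (perm_gset G Hs)"
proof -
  have "perm_gset G Hs \<subseteq> {..<length Hs} \<times> Pow (carrier G)"
  proof
    fix p assume "p \<in> perm_gset G Hs"
    then obtain i h where p: "p = (i, h <# (Hs ! i))" "i < length Hs" "h \<in> carrier G"
      by (rule perm_gsetE)
    have "Hs ! i \<subseteq> carrier G" using HS p(2) by (simp add: subgroup.subset)
    then show "p \<in> {..<length Hs} \<times> Pow (carrier G)" using p l_coset_subset_G by auto
  qed
  moreover have "finite ({..<length Hs} \<times> Pow (carrier G))" using assms by simp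
  ultimately show ?thesis by (rule finite_subset)
qed

lemma kmap_lattice: "kmap G Hs Ks K f \<in> perm_lattice G Ks"
  by (simp add: kmap_def perm_lattice_def)

lemma kmap_add: "kmap G Hs Ks K (\<lambda>x. f x + f' x) = (\<lambda>y. kmap G Hs Ks K f y + kmap G Hs Ks K f' y)"
  by (auto simp add: kmap_def distrib_left sum.distrib)

lemma kmap_equiv:
  assumes fin: "finite (carrier G)"
    and HS: "\<forall>H\<in>set Hs. subgroup H G" and KS: "\<forall>H\<in>set Ks. subgroup H G"
    and inv: "\<forall>g\<in>carrier G. \<forall>y\<in>perm_gset G Ks. \<forall>x\<in>perm_gset G Hs. K (pact G g y) (pact G g x) = K y x"
    and g: "g \<in> carrier G"
  shows "kmap G Hs Ks K (perm_act G Hs g f) = perm_act G Ks g (kmap G Hs Ks K f)"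
proof
  fix y
  show "kmap G Hs Ks K (perm_act G Hs g f) y = perm_act G Ks g (kmap G Hs Ks K f) y"
  proof (cases "y \<in> perm_gset G Ks")
    case False then show ?thesis by (simp add: kmap_def perm_act_pact)
  next
    case True
    let ?X = "perm_gset G Hs"
    have ig: "inv g \<in> carrier G" using g by simp
    have yi: "pact G (inv g) y \<in> perm_gset G Ks" using pact_closed[OF KS ig True] .
    have "kmap G Hs Ks K (perm_act G Hs g f) y = (\<Sum>x\<in>?X. K y x * f (pact G (inv g) x))"
      using True by (simp add: kmap_def perm_act_pact)
    also have "\<dots> = (\<Sum>x\<in>?X. K y (pact G g x) * f (pact G (inv g) (pact G g x)))"
      using sum.reindex_bij_betw[OF pact_bij[OF HS g], of "\<lambda>x. K y x * f (pact G (inv g) x)"]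
      by simp
    also have "\<dots> = (\<Sum>x\<in>?X. K (pact G (inv g) y) x * f x)"
    proof (rule sum.cong[OF refl])
      fix x assume x: "x \<in> ?X"
      have "pact G (inv g) (pact G g x) = x" using HS ig g x by (simp add: pact_mult pact_one)
      moreover have "K y (pact G g x) = K (pact G (inv g) y) (pact G (inv g) (pact G g x))"
        using inv ig True pact_closed[OF HS g x] by simp
      ultimately show "K y (pact G g x) * f (pact G (inv g) (pact G g x)) = K (pact G (inv g) y) x * f x"
        by simp
    qed
    also have "\<dots> = perm_act G Ks g (kmap G Hs Ks K f) y"
      using True yi by (simp add: kmap_def perm_act_pact)
    finally show ?thesis .
  qed
qed

lemma kmap_inverse:
  assumes fin: "finite (perm_gset G Hs)" "finite (perm_gset G Ks)"
    and id: "\<forall>x\<in>perm_gset G Hs. \<forall>x'\<in>perm_gset G Hs.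
        (\<Sum>y\<in>perm_gset G Ks. L x y * K y x') = (if x = x' then 1 else 0)"
    and f: "f \<in> perm_lattice G Hs"
  shows "kmap G Ks Hs L (kmap G Hs Ks K f) = f"
proof
  fix x
  show "kmap G Ks Hs L (kmap G Hs Ks K f) x = f x"
  proof (cases "x \<in> perm_gset G Hs")
    case False
    have "f x = 0" using f False unfolding perm_lattice_def by blast
    then show ?thesis using False by (simp add: kmap_def)
  next
    case True
    let ?X = "perm_gset G Hs" and ?Y = "perm_gset G Ks"
    have "kmap G Ks Hs L (kmap G Hs Ks K f) x = (\<Sum>y\<in>?Y. L x y * (\<Sum>x'\<in>?X. K y x' * f x'))"
      using True by (simp add: kmap_def)
    also have "\<dots> = (\<Sum>y\<in>?Y. \<Sum>x'\<in>?X. L x y * K y x' * f x')"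
      by (simp add: sum_distrib_left mult.assoc)
    also have "\<dots> = (\<Sum>x'\<in>?X. \<Sum>y\<in>?Y. L x y * K y x' * f x')"
      by (rule sum.swap)
    also have "\<dots> = (\<Sum>x'\<in>?X. (\<Sum>y\<in>?Y. L x y * K y x') * f x')"
      by (simp add: sum_distrib_right)
    also have "\<dots> = (\<Sum>x'\<in>?X. (if x = x' then f x' else 0))"
      using id True by (intro sum.cong) auto
    also have "\<dots> = f x" using True fin by simp
    finally show ?thesis .
  qed
qed

lemma kmap_iso:
  fixes K :: "nat \<times> 'a set \<Rightarrow> nat \<times> 'a set \<Rightarrow> int" and L :: "nat \<times> 'a set \<Rightarrow> nat \<times> 'a set \<Rightarrow> int"
  assumes fin: "finite (carrier G)"
    and HS: "\<forall>H\<in>set Hs. subgroup H G" and KS: "\<forall>H\<in>set Ks. subgroup H G"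
    and inv: "\<forall>g\<in>carrier G. \<forall>y\<in>perm_gset G Ks. \<forall>x\<in>perm_gset G Hs. K (pact G g y) (pact G g x) = K y x"
    and id1: "\<forall>x\<in>perm_gset G Hs. \<forall>x'\<in>perm_gset G Hs.
        (\<Sum>y\<in>perm_gset G Ks. L x y * K y x') = (if x = x' then 1 else 0)"
    and id2: "\<forall>y\<in>perm_gset G Ks. \<forall>y'\<in>perm_gset G Ks.
        (\<Sum>x\<in>perm_gset G Hs. K y x * L x y') = (if y = y' then 1 else 0)"
  shows "perm_lattice_iso G Hs Ks"
  unfolding perm_lattice_iso_def
proof (intro exI conjI ballI)
  have fX: "finite (perm_gset G Hs)" and fY: "finite (perm_gset G Ks)"
    using finite_perm_gset fin HS KS by auto
  show "bij_betw (kmap G Hs Ks K) (perm_lattice G Hs) (perm_lattice G Ks)"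
  proof (rule bij_betw_byWitness[where f' = "kmap G Ks Hs L"])
    show "\<forall>a\<in>perm_lattice G Hs. kmap G Ks Hs L (kmap G Hs Ks K a) = a"
      using kmap_inverse[OF fX fY id1] by blast
    show "\<forall>a\<in>perm_lattice G Ks. kmap G Hs Ks K (kmap G Ks Hs L a) = a"
      using kmap_inverse[OF fY fX id2] by blast
    show "kmap G Hs Ks K ` perm_lattice G Hs \<subseteq> perm_lattice G Ks"
      using kmap_lattice by blast
    show "kmap G Ks Hs L ` perm_lattice G Ks \<subseteq> perm_lattice G Hs"
      using kmap_lattice by blast
  qed
  fix f f' assume "f \<in> perm_lattice G Hs" "f' \<in> perm_lattice G Hs"
  show "kmap G Hs Ks K (\<lambda>x. f x + f' x) = (\<lambda>y. kmap G Hs Ks K f y + kmap G Hs Ks K f' y)"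
    by (rule kmap_add)
next
  fix g f assume "g \<in> carrier G" "f \<in> perm_lattice G Hs"
  then show "kmap G Hs Ks K (perm_act G Hs g f) = perm_act G Ks g (kmap G Hs Ks K f)"
    using kmap_equiv[OF fin HS KS inv] by blast
qed

lemma pt_bij:
  assumes HS: "\<forall>H\<in>set Hs. subgroup H G"
    and A1: "\<forall>k<n. b k < length Hs \<and> r k \<in> carrier G"
    and A2: "\<forall>i<length Hs. \<forall>h\<in>carrier G. c i h < n \<and> b (c i h) = i \<and> inv (r (c i h)) \<otimes> h \<in> Hs!i"
    and A3: "\<forall>k<n. \<forall>h\<in>Hs!(b k). c (b k) (r k \<otimes> h) = k"
  shows "bij_betw (\<lambda>k. (b k, r k <# Hs!(b k))) {..<n} (perm_gset G Hs)"
    and "\<And>g k. g \<in> carrier G \<Longrightarrow> k < n \<Longrightarrow>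
           pact G g (b k, r k <# Hs!(b k)) = (\<lambda>k. (b k, r k <# Hs!(b k))) (c (b k) (g \<otimes> r k))
           \<and> c (b k) (g \<otimes> r k) < n"
proof -
  have sg: "\<And>i. i < length Hs \<Longrightarrow> subgroup (Hs!i) G" using HS by simp
  have key: "h <# Hs!i = r (c i h) <# Hs!i" if i: "i < length Hs" and h: "h \<in> carrier G" for i h
  proof -
    have c: "c i h < n" "inv (r (c i h)) \<otimes> h \<in> Hs!i" using A2 i h by auto
    have rc: "r (c i h) \<in> carrier G" using A1 c(1) by auto
    have "h \<in> r (c i h) <# Hs!i"
      using subgroup.lcos_module_rev[OF sg[OF i] is_group rc h c(2)] .
    then show ?thesis using l_repr_independence[OF _ rc sg[OF i]] by simp
  qed
  show "bij_betw (\<lambda>k. (b k, r k <# Hs!(b k))) {..<n} (perm_gset G Hs)"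
    unfolding bij_betw_def
  proof (intro conjI)
    show "inj_on (\<lambda>k. (b k, r k <# Hs!(b k))) {..<n}"
    proof (rule inj_onI)
      fix k l assume k: "k \<in> {..<n}" and l: "l \<in> {..<n}"
        and eq: "(b k, r k <# Hs!(b k)) = (b l, r l <# Hs!(b l))"
      then have bb: "b k = b l" and cc: "r k <# Hs!(b k) = r l <# Hs!(b k)" by auto
      have bk: "b k < length Hs" "r k \<in> carrier G" "r l \<in> carrier G" using A1 k l by auto
      have "r l \<in> r l <# Hs!(b k)"
        using subgroup.lcos_module_rev[OF sg[OF bk(1)] is_group bk(3) bk(3)] bk(3) sg[OF bk(1)]
        by (simp add: subgroup.one_closed)
      then have "r l \<in> r k <# Hs!(b k)" using cc by simp
      then obtain h where h: "h \<in> Hs!(b k)" "r l = r k \<otimes> h" unfolding l_coset_def by blast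
      have one: "\<one> \<in> Hs!(b l)" using sg[OF bk(1)] bb by (simp add: subgroup.one_closed)
      have "c (b l) (r l \<otimes> \<one>) = l" using A3 l one by auto
      then have "c (b k) (r l) = l" using bk bb by simp
      moreover have "c (b k) (r k \<otimes> h) = k" using A3 k h(1) by auto
      ultimately show "k = l" using h(2) by (metis (no_types))
    qed
    show "(\<lambda>k. (b k, r k <# Hs!(b k))) ` {..<n} = perm_gset G Hs"
    proof
      show "(\<lambda>k. (b k, r k <# Hs!(b k))) ` {..<n} \<subseteq> perm_gset G Hs"
        using A1 by (auto intro: perm_gsetI)
      show "perm_gset G Hs \<subseteq> (\<lambda>k. (b k, r k <# Hs!(b k))) ` {..<n}"
      proof
        fix p assume "p \<in> perm_gset G Hs"
        then obtain i h where p: "p = (i, h <# (Hs ! i))" "i < length Hs" "h \<in> carrier G"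
          by (rule perm_gsetE)
        have ci: "c i h < n" "b (c i h) = i" using A2 p by auto
        have "p = (b (c i h), r (c i h) <# Hs!(b (c i h)))"
          using p(1) key[OF p(2,3)] ci(2) by simp
        note this ci
        then show "p \<in> (\<lambda>k. (b k, r k <# Hs!(b k))) ` {..<n}" by blast
      qed
    qed
  qed
  fix g k assume g: "g \<in> carrier G" and k: "k < n"
  have bk: "b k < length Hs" "r k \<in> carrier G" using A1 k by auto
  have sub: "Hs!(b k) \<subseteq> carrier G" using sg[OF bk(1)] by (simp add: subgroup.subset)
  have gr: "g \<otimes> r k \<in> carrier G" using g bk by simp
  have "pact G g (b k, r k <# Hs!(b k)) = (b k, (g \<otimes> r k) <# Hs!(b k))"
    using g bk sub by (simp add: pact_def lcos_m_assoc)
  also have "\<dots> = (b k, r (c (b k) (g \<otimes> r k)) <# Hs!(b k))" using key[OF bk(1) gr] by simp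
  finally show "pact G g (b k, r k <# Hs!(b k)) = (\<lambda>k. (b k, r k <# Hs!(b k))) (c (b k) (g \<otimes> r k))
           \<and> c (b k) (g \<otimes> r k) < n"
    using A2 bk gr by auto
qed

lemma index_iso:
  fixes M N :: "nat \<Rightarrow> nat \<Rightarrow> int"
  assumes fin: "finite (carrier G)"
    and HS: "\<forall>H\<in>set Hs. subgroup H G" and KS: "\<forall>H\<in>set Ks. subgroup H G"
    and A1: "\<forall>k<n. bX k < length Hs \<and> rX k \<in> carrier G"
    and A2: "\<forall>i<length Hs. \<forall>h\<in>carrier G. cX i h < n \<and> bX (cX i h) = i \<and> inv (rX (cX i h)) \<otimes> h \<in> Hs!i"
    and A3: "\<forall>k<n. \<forall>h\<in>Hs!(bX k). cX (bX k) (rX k \<otimes> h) = k"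
    and B1: "\<forall>k<m. bY k < length Ks \<and> rY k \<in> carrier G"
    and B2: "\<forall>i<length Ks. \<forall>h\<in>carrier G. cY i h < m \<and> bY (cY i h) = i \<and> inv (rY (cY i h)) \<otimes> h \<in> Ks!i"
    and B3: "\<forall>k<m. \<forall>h\<in>Ks!(bY k). cY (bY k) (rY k \<otimes> h) = k"
    and INV: "\<forall>g\<in>carrier G. \<forall>k<m. \<forall>l<n. M (cY (bY k) (g \<otimes> rY k)) (cX (bX l) (g \<otimes> rX l)) = M k l"
    and NM: "\<forall>l<n. \<forall>l'<n. (\<Sum>k<m. N l k * M k l') = (if l = l' then 1 else 0)"
    and MN: "\<forall>k<m. \<forall>k'<m. (\<Sum>l<n. M k l * N l k') = (if k = k' then 1 else 0)"
  shows "perm_lattice_iso G Hs Ks"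
proof -
  define ptX where "ptX = (\<lambda>k. (bX k, rX k <# Hs!(bX k)))"
  define ptY where "ptY = (\<lambda>k. (bY k, rY k <# Ks!(bY k)))"
  note PX = pt_bij[OF HS A1 A2 A3, folded ptX_def]
  note PY = pt_bij[OF KS B1 B2 B3, folded ptY_def]
  define iX where "iX = inv_into {..<n} ptX"
  define iY where "iY = inv_into {..<m} ptY"
  have injX: "inj_on ptX {..<n}" and injY: "inj_on ptY {..<m}"
    using PX(1) PY(1) by (auto simp: bij_betw_def)
  have iXpt: "\<And>l. l < n \<Longrightarrow> iX (ptX l) = l" unfolding iX_def using injX by (simp add: inv_into_f_f)
  have iYpt: "\<And>l. l < m \<Longrightarrow> iY (ptY l) = l" unfolding iY_def using injY by (simp add: inv_into_f_f)
  have surjX: "\<And>x. x \<in> perm_gset G Hs \<Longrightarrow> \<exists>l<n. x = ptX l"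
    using PX(1) unfolding bij_betw_def by auto
  have surjY: "\<And>x. x \<in> perm_gset G Ks \<Longrightarrow> \<exists>l<m. x = ptY l"
    using PY(1) unfolding bij_betw_def by auto
  define K where "K = (\<lambda>y x. M (iY y) (iX x))"
  define L where "L = (\<lambda>x y. N (iX x) (iY y))"
  show ?thesis
  proof (rule kmap_iso[OF fin HS KS, of K L])
    show "\<forall>g\<in>carrier G. \<forall>y\<in>perm_gset G Ks. \<forall>x\<in>perm_gset G Hs. K (pact G g y) (pact G g x) = K y x"
    proof (intro ballI)
      fix g y x assume g: "g \<in> carrier G" and y: "y \<in> perm_gset G Ks" and x: "x \<in> perm_gset G Hs"
      obtain k where k: "k < m" "y = ptY k" using surjY[OF y] by blast
      obtain l where l: "l < n" "x = ptX l" using surjX[OF x] by blast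
      have e1: "pact G g y = ptY (cY (bY k) (g \<otimes> rY k))" "cY (bY k) (g \<otimes> rY k) < m"
        using PY(2)[OF g k(1)] k(2) unfolding ptY_def by auto
      have e2: "pact G g x = ptX (cX (bX l) (g \<otimes> rX l))" "cX (bX l) (g \<otimes> rX l) < n"
        using PX(2)[OF g l(1)] l(2) unfolding ptX_def by auto
      have "M (cY (bY k) (g \<otimes> rY k)) (cX (bX l) (g \<otimes> rX l)) = M k l" using INV g k(1) l(1) by blast
      then show "K (pact G g y) (pact G g x) = K y x"
        unfolding K_def e1(1) e2(1) iYpt[OF e1(2)] iXpt[OF e2(2)] using k l iYpt iXpt by simp
    qed
    show "\<forall>x\<in>perm_gset G Hs. \<forall>x'\<in>perm_gset G Hs.
        (\<Sum>y\<in>perm_gset G Ks. L x y * K y x') = (if x = x' then 1 else 0)"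
    proof (intro ballI)
      fix x x' assume x: "x \<in> perm_gset G Hs" and x': "x' \<in> perm_gset G Hs"
      obtain l where l: "l < n" "x = ptX l" using surjX[OF x] by blast
      obtain l' where l': "l' < n" "x' = ptX l'" using surjX[OF x'] by blast
      have "(\<Sum>y\<in>perm_gset G Ks. L x y * K y x') = (\<Sum>k\<in>{..<m}. L x (ptY k) * K (ptY k) x')"
        using sum.reindex_bij_betw[OF PY(1), of "\<lambda>y. L x y * K y x'"] by simp
      also have "\<dots> = (\<Sum>k<m. N l k * M k l')"
        using l l' by (simp add: K_def L_def iXpt iYpt)
      also have "\<dots> = (if l = l' then 1 else 0)"
        using NM l l' by blast
      also have "\<dots> = (if x = x' then 1 else 0)"
        using l l' injX unfolding inj_on_def by auto
      finally show "(\<Sum>y\<in>perm_gset G Ks. L x y * K y x') = (if x = x' then 1 else 0)" .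
    qed
    show "\<forall>y\<in>perm_gset G Ks. \<forall>y'\<in>perm_gset G Ks.
        (\<Sum>x\<in>perm_gset G Hs. K y x * L x y') = (if y = y' then 1 else 0)"
    proof (intro ballI)
      fix y y' assume y: "y \<in> perm_gset G Ks" and y': "y' \<in> perm_gset G Ks"
      obtain k where k: "k < m" "y = ptY k" using surjY[OF y] by blast
      obtain k' where k': "k' < m" "y' = ptY k'" using surjY[OF y'] by blast
      have "(\<Sum>x\<in>perm_gset G Hs. K y x * L x y') = (\<Sum>l\<in>{..<n}. K y (ptX l) * L (ptX l) y')"
        using sum.reindex_bij_betw[OF PX(1), of "\<lambda>x. K y x * L x y'"] by simp
      also have "\<dots> = (\<Sum>l<n. M k l * N l k')"
        using k k' by (simp add: K_def L_def iXpt iYpt)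
      also have "\<dots> = (if k = k' then 1 else 0)"
        using MN k k' by blast
      also have "\<dots> = (if y = y' then 1 else 0)"
        using k k' injY unfolding inj_on_def by auto
      finally show "(\<Sum>x\<in>perm_gset G Hs. K y x * L x y') = (if y = y' then 1 else 0)" .
    qed
  qed
qed

end



definition Glist :: "(nat \<times> bool) list" where
  "Glist = [(0,False),(1,False),(2,False),(3,False),(4,False),(5,False),(0,True),(1,True),(2,True),(3,True),(4,True),(5,True)]"

definition d6inv :: "nat \<times> bool \<Rightarrow> nat \<times> bool" where
  "d6inv x = (if snd x then x else ((6 - fst x) mod 6, False))"

lemma D6_mult: "x \<otimes>\<^bsub>D6\<^esub> y = d6_mult x y" by (simp add: D6_def)
lemma D6_one: "\<one>\<^bsub>D6\<^esub> = (0, False)" by (simp add: D6_def)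

lemma carrier_D6: "carrier D6 = set Glist"
proof -
  have "{0..<6::nat} = {0,1,2,3,4,5}" by auto
  moreover have "(UNIV :: bool set) = {False, True}" by auto
  ultimately show ?thesis by (auto simp: D6_def Glist_def)
qed

lemma la2: "list_all (\<lambda>x. list_all (P x) ys) xs \<Longrightarrow> \<forall>x\<in>set xs. \<forall>y\<in>set ys. P x y"
  by (simp add: list_all_iff)

lemma group_D6: "group D6"
proof (rule groupI)
  have c: "list_all (\<lambda>x. list_all (\<lambda>y. d6_mult x y \<in> set Glist) Glist) Glist" by code_simp
  show "\<And>x y. x \<in> carrier D6 \<Longrightarrow> y \<in> carrier D6 \<Longrightarrow> x \<otimes>\<^bsub>D6\<^esub> y \<in> carrier D6"
    using la2[OF c] by (simp add: carrier_D6 D6_mult)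
  show "\<one>\<^bsub>D6\<^esub> \<in> carrier D6" by (simp add: carrier_D6 D6_one Glist_def)
  have a: "list_all (\<lambda>x. list_all (\<lambda>y. list_all (\<lambda>z. d6_mult (d6_mult x y) z = d6_mult x (d6_mult y z)) Glist) Glist) Glist"
    by code_simp
  show "\<And>x y z. x \<in> carrier D6 \<Longrightarrow> y \<in> carrier D6 \<Longrightarrow> z \<in> carrier D6 \<Longrightarrow>
      x \<otimes>\<^bsub>D6\<^esub> y \<otimes>\<^bsub>D6\<^esub> z = x \<otimes>\<^bsub>D6\<^esub> (y \<otimes>\<^bsub>D6\<^esub> z)"
    using a by (simp add: carrier_D6 D6_mult list_all_iff)
  have o: "list_all (\<lambda>x. d6_mult (0,False) x = x \<and> d6inv x \<in> set Glist \<and> d6_mult (d6inv x) x = (0,False)) Glist"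
    by code_simp
  show "\<And>x. x \<in> carrier D6 \<Longrightarrow> \<one>\<^bsub>D6\<^esub> \<otimes>\<^bsub>D6\<^esub> x = x"
    using o by (simp add: carrier_D6 D6_mult D6_one list_all_iff)
  show "\<And>x. x \<in> carrier D6 \<Longrightarrow> \<exists>y\<in>carrier D6. y \<otimes>\<^bsub>D6\<^esub> x = \<one>\<^bsub>D6\<^esub>"
    using o by (auto simp add: carrier_D6 D6_mult D6_one list_all_iff)
qed

lemma inv_D6: assumes "x \<in> carrier D6" shows "inv\<^bsub>D6\<^esub> x = d6inv x"
proof -
  have o: "list_all (\<lambda>x. d6inv x \<in> set Glist \<and> d6_mult (d6inv x) x = (0,False)) Glist"
    by code_simp
  then show ?thesis using assms group.inv_equality[OF group_D6, of "d6inv x" x]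
    by (simp add: carrier_D6 D6_mult D6_one list_all_iff)
qed

definition clos :: "(nat \<times> bool) list \<Rightarrow> (nat \<times> bool) list" where
  "clos A = remdups (A @ [d6_mult a b. a \<leftarrow> A, b \<leftarrow> A])"

lemma clos_sub: assumes "set A \<subseteq> generate D6 S" shows "set (clos A) \<subseteq> generate D6 S"
proof -
  have e: "\<And>a b. a \<in> generate D6 S \<Longrightarrow> b \<in> generate D6 S \<Longrightarrow> d6_mult a b \<in> generate D6 S"
    using generate.eng by (metis D6_mult)
  have "set (clos A) = set A \<union> {d6_mult a b | a b. a \<in> set A \<and> b \<in> set A}" by (auto simp: clos_def)
  then show ?thesis using assms e by blast
qed

lemma subgroup_list:
  assumes "list_all (\<lambda>a. list_all (\<lambda>b. d6_mult a b \<in> set l) l) l"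
    "list_all (\<lambda>a. d6inv a \<in> set l) l" "list_all (\<lambda>a. a \<in> set Glist) l" "l \<noteq> []"
  shows "subgroup (set l) D6"
proof -
  have sub: "set l \<subseteq> carrier D6" using assms(3) by (simp add: carrier_D6 list_all_iff subset_iff)
  show ?thesis
  proof (rule group.subgroupI[OF group_D6 sub])
    show "set l \<noteq> {}" using assms(4) by simp
    show "\<And>a. a \<in> set l \<Longrightarrow> inv\<^bsub>D6\<^esub> a \<in> set l" using assms(2) sub inv_D6 by (auto simp: list_all_iff)
    show "\<And>a b. a \<in> set l \<Longrightarrow> b \<in> set l \<Longrightarrow> a \<otimes>\<^bsub>D6\<^esub> b \<in> set l"
      using assms(1) by (simp add: list_all_iff D6_mult)
  qed
qed

lemma gen_list:
  assumes "list_all (\<lambda>a. list_all (\<lambda>b. d6_mult a b \<in> set l) l) l"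
    "list_all (\<lambda>a. d6inv a \<in> set l) l" "list_all (\<lambda>a. a \<in> set Glist) l" "l \<noteq> []"
    "set Sl \<subseteq> set l" "set l \<subseteq> set (clos (clos (clos ((0,False) # Sl))))" "S = set Sl"
  shows "generate D6 S = set l"
proof
  have "subgroup (set l) D6" using subgroup_list assms(1-4) by blast
  then show "generate D6 S \<subseteq> set l"
    using group.generate_subgroup_incl[OF group_D6] assms(5,7) by blast
  have "set ((0,False) # Sl) \<subseteq> generate D6 S"
    using generate.one[of D6 S] generate.incl[of _ S D6] assms(7) by (auto simp: D6_one)
  then show "set l \<subseteq> generate D6 S" using assms(6) clos_sub by blast
qed

definition "HV4 = [(0,False),(3,False),(0,True),(3,True)]"
definition "HC6 = [(0,False),(1,False),(2,False),(3,False),(4,False),(5,False)]"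
definition "HS3a = [(0,False),(2,False),(4,False),(0,True),(2,True),(4,True)]"
definition "HS3b = [(0,False),(2,False),(4,False),(1,True),(3,True),(5,True)]"
definition "HC2a = [(0,False),(3,False)]"
definition "HC2b = [(0,False),(0,True)]"
definition "HC2c = [(0,False),(1,True)]"
definition "HC3 = [(0,False),(2,False),(4,False)]"

lemma gV4: "generate D6 {(3,False),(0,True)} = set HV4"
  by (rule gen_list[where Sl="[(3,False),(0,True)]"]; code_simp)
lemma gC6: "generate D6 {(1,False)} = set HC6"
  by (rule gen_list[where Sl="[(1,False)]"]; code_simp)
lemma gS3a: "generate D6 {(2,False),(0,True)} = set HS3a"
  by (rule gen_list[where Sl="[(2,False),(0,True)]"]; code_simp)
lemma gS3b: "generate D6 {(2,False),(1,True)} = set HS3b"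
  by (rule gen_list[where Sl="[(2,False),(1,True)]"]; code_simp)
lemma gC2a: "generate D6 {(3,False)} = set HC2a"
  by (rule gen_list[where Sl="[(3,False)]"]; code_simp)
lemma gC2b: "generate D6 {(0,True)} = set HC2b"
  by (rule gen_list[where Sl="[(0,True)]"]; code_simp)
lemma gC2c: "generate D6 {(1,True)} = set HC2c"
  by (rule gen_list[where Sl="[(1,True)]"]; code_simp)
lemma gC3: "generate D6 {(2,False)} = set HC3"
  by (rule gen_list[where Sl="[(2,False)]"]; code_simp)



definition bX :: "nat list" where "bX = [0, 0, 0, 0, 0, 0, 0, 0, 0, 0, 0, 0, 1, 1, 1, 2, 2, 2, 3, 3, 4, 4, 5, 5]"

definition rX :: "(nat \<times> bool) list" where "rX = [(0, False), (1, False), (2, False), (3, False), (4, False), (5, False), (0, True), (1, True), (2, True), (3, True), (4, True), (5, True), (0, False), (1, False), (2, False), (0, False), (1, False), (2, False), (0, False), (0, True), (0, False), (1, False), (0, False), (1, False)]"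

definition ctX :: "nat list list" where "ctX = [[0, 1, 2, 3, 4, 5, 6, 7, 8, 9, 10, 11], [12, 13, 14, 12, 13, 14, 12, 13, 14, 12, 13, 14], [15, 16, 17, 15, 16, 17, 15, 16, 17, 15, 16, 17], [18, 18, 18, 18, 18, 18, 19, 19, 19, 19, 19, 19], [20, 21, 20, 21, 20, 21, 20, 21, 20, 21, 20, 21], [22, 23, 22, 23, 22, 23, 23, 22, 23, 22, 23, 22]]"

definition bY :: "nat list" where "bY = [0, 0, 0, 0, 0, 0, 1, 1, 1, 1, 1, 1, 2, 2, 2, 2, 2, 2, 3, 3, 3, 3, 4, 5]"

definition rY :: "(nat \<times> bool) list" where "rY = [(0, False), (1, False), (2, False), (0, True), (1, True), (2, True), (0, False), (1, False), (2, False), (3, False), (4, False), (5, False), (0, False), (1, False), (2, False), (3, False), (4, False), (5, False), (0, False), (1, False), (0, True), (1, True), (0, False), (0, False)]"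

definition ctY :: "nat list list" where "ctY = [[0, 1, 2, 0, 1, 2, 3, 4, 5, 3, 4, 5], [6, 7, 8, 9, 10, 11, 6, 7, 8, 9, 10, 11], [12, 13, 14, 15, 16, 17, 17, 12, 13, 14, 15, 16], [18, 19, 18, 19, 18, 19, 20, 21, 20, 21, 20, 21], [22, 22, 22, 22, 22, 22, 22, 22, 22, 22, 22, 22], [23, 23, 23, 23, 23, 23, 23, 23, 23, 23, 23, 23]]"

definition Ml :: "int list list" where "Ml = [[0, 0, (-1), 0, 0, (-1), 0, (-1), (-1), 0, (-1), (-1), 0, 1, 0, 0, 0, 1, 1, 0, 0, 0, 0, 0], [(-1), 0, 0, (-1), 0, 0, (-1), 0, (-1), (-1), 0, (-1), 0, 0, 1, 1, 0, 0, 1, 0, 0, 0, 0, 0], [0, (-1), 0, 0, (-1), 0, (-1), (-1), 0, (-1), (-1), 0, 1, 0, 0, 0, 1, 0, 1, 0, 0, 0, 0, 0], [0, (-1), (-1), 0, (-1), (-1), 0, (-1), 0, 0, (-1), 0, 0, 0, 1, 0, 1, 0, 0, 1, 0, 0, 0, 0], [(-1), 0, (-1), (-1), 0, (-1), 0, 0, (-1), 0, 0, (-1), 1, 0, 0, 0, 0, 1, 0, 1, 0, 0, 0, 0], [(-1), (-1), 0, (-1), (-1), 0, (-1), 0, 0, (-1), 0, 0, 0, 1, 0, 1, 0, 0, 0, 1, 0, 0, 0, 0], [1, 1, 1, 0, 1, 1, 1, 1, 1, 0, 1, 1, 1, 0, 0, 1, 0, 0, (-1), (-1), 0, (-1), 1,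 1], [1, 1, 1, 1, 0, 1, 1, 1, 1, 1, 0, 1, 0, 1, 0, 0, 1, 0, (-1), (-1), (-1), 0, 1, 1], [1, 1, 1, 1, 1, 0, 1, 1, 1, 1, 1, 0, 0, 0, 1, 0, 0, 1, (-1), (-1), 0, (-1), 1, 1], [0, 1, 1, 1, 1, 1, 0, 1, 1, 1, 1, 1, 1, 0, 0, 1, 0, 0, (-1), (-1), (-1), 0, 1, 1], [1, 0, 1, 1, 1, 1, 1, 0, 1, 1, 1, 1, 0, 1, 0, 0, 1, 0, (-1), (-1), 0, (-1), 1, 1], [1, 1, 0, 1, 1, 1, 1, 1, 0, 1, 1, 1, 0, 0, 1, 0, 0, 1, (-1), (-1), (-1), 0, 1, 1], [1, 1, 0, (-1), 0, 0, 1, 1, 0, 0, (-1), 0, 0, 0, 1, 0, 0, (-1), 0, 0, (-1), (-1), (-1), 0], [0, 1, 1, 0, (-1), 0, 0, 1, 1, 0, 0, (-1), 1, 0, 0, (-1), 0, 0, 0, 0, (-1), (-1), 0, (-1)], [0, 0, 1, 1, 0, (-1), (-1), 0, 1, 1, 0, 0, 0, 1, 0, 0, (-1), 0, 0, 0, (-1), (-1), (-1), 0], [(-1), 0, 0, 1, 1, 0, 0, (-1), 0, 1, 1, 0, 0, 0, 1, 0, 0, (-1), 0, 0, (-1), (-1), 0, (-1)], [0, (-1), 0, 0, 1, 1, 0, 0, (-1), 0, 1, 1, 1, 0, 0, (-1), 0, 0, 0, 0, (-1), (-1), (-1), 0], [1, 0, (-1), 0, 0, 1, 1, 0, 0, (-1),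 0, 1, 0, 1, 0, 0, (-1), 0, 0, 0, (-1), (-1), 0, (-1)], [0, 0, 0, 0, 0, 0, 1, 0, 1, 0, 1, 0, 0, 0, 0, 0, 0, 0, (-1), 1, 1, 0, 1, 0], [0, 0, 0, 0, 0, 0, 0, 1, 0, 1, 0, 1, 0, 0, 0, 0, 0, 0, (-1), 1, 0, 1, 0, 1], [1, 0, 1, 0, 1, 0, 0, 0, 0, 0, 0, 0, 0, 0, 0, 0, 0, 0, 1, (-1), 1, 0, 0, 1], [0, 1, 0, 1, 0, 1, 0, 0, 0, 0, 0, 0, 0, 0, 0, 0, 0, 0, 1, (-1), 0, 1, 1, 0], [0, 0, 0, 0, 0, 0, 0, 0, 0, 0, 0, 0, 0, 0, 0, (-1), (-1), (-1), 1, 1, 0, 0, 0, 0], [1, 1, 1, 1, 1, 1, 1, 1, 1, 1, 1, 1, 1, 1, 1, (-1), (-1), (-1), 1, 1, 0, 0, 1, 1]]"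

definition Nl :: "int list list" where "Nl = [[(-1), 1, (-4), 1, (-3), (-4), 1, 0, (-2), 1, 1, 0, (-6), (-3), (-4), (-6), (-4), (-4), (-13), (-13), (-13), (-14), (-6), 12], [(-4), (-1), 1, (-4), 1, (-3), 0, 1, 0, (-2), 1, 1, (-4), (-6), (-3), (-4), (-6), (-4), (-13), (-13), (-14), (-13), (-6), 12], [1, (-4), (-1), (-3), (-4), 1, 1, 0, 1, 0, (-2), 1, (-4), (-4), (-6), (-3), (-4), (-6), (-13), (-13), (-13), (-14), (-6), 12], [(-1), 1, (-4), 1, (-3), (-4), 1, 1, 0, 1, 0, (-2), (-6), (-4), (-4), (-6), (-3), (-4), (-13), (-13), (-14), (-13), (-6), 12], [(-4), (-1), 1, (-4), 1, (-3), (-2), 1, 1, 0, 1, 0, (-4), (-6), (-4), (-4), (-6), (-3), (-13), (-13), (-13), (-14), (-6), 12], [1, (-4), (-1), (-3), (-4), 1, 0, (-2), 1, 1, 0, 1, (-3), (-4), (-6), (-4), (-4), (-6), (-13), (-13), (-14), (-13), (-6), 12], [1, (-4), (-3), (-1), (-4), 1, 1, 0, 1, 1, (-2), 0, (-4), (-4), (-6), (-4), (-3), (-6), (-13), (-14), (-13), (-13), (-6), 12], [(-3), 1, (-4), 1, (-1), (-4), 0, 1, 0, 1, 1, (-2), (-6), (-4), (-4), (-6), (-4), (-3), (-14), (-13), (-13), (-13), (-6), 12], [(-4), (-3), 1, (-4), 1, (-1), (-2), 0, 1, 0, 1, 1, (-3), (-6), (-4), (-4), (-6), (-4), (-13), (-14),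 (-13), (-13), (-6), 12], [1, (-4), (-3), (-1), (-4), 1, 1, (-2), 0, 1, 0, 1, (-4), (-3), (-6), (-4), (-4), (-6), (-14), (-13), (-13), (-13), (-6), 12], [(-3), 1, (-4), 1, (-1), (-4), 1, 1, (-2), 0, 1, 0, (-6), (-4), (-3), (-6), (-4), (-4), (-13), (-14), (-13), (-13), (-6), 12], [(-4), (-3), 1, (-4), 1, (-1), 0, 1, 1, (-2), 0, 1, (-4), (-6), (-4), (-3), (-6), (-4), (-14), (-13), (-13), (-13), (-6), 12], [7, 6, 5, 7, 5, 6, 0, (-1), (-1), 0, (-1), (-1), 16, 17, 16, 16, 17, 16, 48, 48, 48, 48, 21, (-43)], [5, 7, 6, 6, 7, 5, (-1), 0, (-1), (-1), 0, (-1), 16, 16, 17, 16, 16, 17, 48, 48, 48, 48, 21, (-43)], [6, 5, 7, 5, 6, 7, (-1), (-1), 0, (-1), (-1), 0, 17, 16, 16, 17, 16, 16, 48, 48, 48, 48, 21, (-43)], [(-4), (-6), (-9), (-4), (-9), (-6), 2, 0, 0, 2, 0, 0, (-18), (-16), (-18), (-18), (-16), (-18), (-51), (-51), (-51), (-51), (-23), 46], [(-9), (-4), (-6), (-6), (-4), (-9), 0, 2, 0, 0, 2, 0, (-18), (-18), (-16), (-18), (-18), (-16), (-51), (-51), (-51), (-51), (-23), 46], [(-6), (-9), (-4), (-9), (-6), (-4), 0, 0, 2, 0, 0, 2, (-16), (-18), (-18), (-16), (-18), (-18), (-51), (-51), (-51), (-51), (-23), 46], [(-10), (-10), (-10), (-9),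 (-9), (-9), 1, 1, 1, 1, 1, 1, (-26), (-26), (-26), (-26), (-26), (-26), (-77), (-77), (-76), (-76), (-34), 69], [(-9), (-9), (-9), (-10), (-10), (-10), 1, 1, 1, 1, 1, 1, (-26), (-26), (-26), (-26), (-26), (-26), (-76), (-76), (-77), (-77), (-34), 69], [4, 4, 4, 4, 4, 4, 0, (-1), 0, (-1), 0, (-1), 11, 11, 11, 11, 11, 11, 32, 33, 32, 33, 14, (-29)], [4, 4, 4, 4, 4, 4, (-1), 0, (-1), 0, (-1), 0, 11, 11, 11, 11, 11, 11, 33, 32, 33, 32, 14, (-29)], [1, 1, 1, 1, 1, 1, 0, 0, 0, 0, 0, 0, 2, 3, 2, 3, 2, 3, 7, 8, 8, 7, 4, (-7)], [1, 1, 1, 1, 1, 1, 0, 0, 0, 0, 0, 0, 3, 2, 3, 2, 3, 2, 8, 7, 7, 8, 4, (-7)]]"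

definition HXl :: "(nat \<times> bool) list list" where "HXl = [[(0,False)], HV4, HV4, HC6, HS3a, HS3b]"
definition HYl :: "(nat \<times> bool) list list" where "HYl = [HC2a, HC2b, HC2c, HC3, Glist, Glist]"

definition gcode :: "nat\<times>bool \<Rightarrow> nat" where "gcode g = (if snd g then fst g + 6 else fst g)"
definition cXf where "cXf i h = ctX ! i ! gcode h"
definition cYf where "cYf i h = ctY ! i ! gcode h"
definition Mf :: "nat \<Rightarrow> nat \<Rightarrow> int" where "Mf k l = Ml ! k ! l"
definition Nf :: "nat \<Rightarrow> nat \<Rightarrow> int" where "Nf k l = Nl ! k ! l"

lemma subgroups_all: "list_all (\<lambda>l. list_all (\<lambda>a. list_all (\<lambda>b. d6_mult a b \<in> set l) l) l \<and>
    list_all (\<lambda>a. d6inv a \<in> set l) l \<and> list_all (\<lambda>a. a \<in> set Glist) l \<and> l \<noteq> []) (HXl @ HYl)"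
  by code_simp

lemma subgroups_ok: "\<forall>l\<in>set (HXl @ HYl). subgroup (set l) D6"
  using subgroups_all subgroup_list by (simp add: list_all_iff)



lemma chkA1: "list_all (\<lambda>k. bX!k < 6 \<and> rX!k \<in> set Glist) [0..<24]" by code_simp
lemma chkB1: "list_all (\<lambda>k. bY!k < 6 \<and> rY!k \<in> set Glist) [0..<24]" by code_simp
lemma chkA2: "list_all (\<lambda>i. list_all (\<lambda>h. cXf i h < 24 \<and> bX!(cXf i h) = i \<and> rX!(cXf i h) \<in> set Glist
   \<and> d6_mult (d6inv (rX!(cXf i h))) h \<in> set (HXl!i)) Glist) [0..<6]" by code_simp
lemma chkB2: "list_all (\<lambda>i. list_all (\<lambda>h. cYf i h < 24 \<and> bY!(cYf i h) = i \<and> rY!(cYf i h) \<in> set Glist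
   \<and> d6_mult (d6inv (rY!(cYf i h))) h \<in> set (HYl!i)) Glist) [0..<6]" by code_simp
lemma chkA3: "list_all (\<lambda>k. list_all (\<lambda>h. cXf (bX!k) (d6_mult (rX!k) h) = k) (HXl!(bX!k))) [0..<24]" by code_simp
lemma chkB3: "list_all (\<lambda>k. list_all (\<lambda>h. cYf (bY!k) (d6_mult (rY!k) h) = k) (HYl!(bY!k))) [0..<24]" by code_simp


lemma chkINV: "list_all (\<lambda>g. list_all (\<lambda>k. list_all (\<lambda>l.
    Mf (cYf (bY!k) (d6_mult g (rY!k))) (cXf (bX!l) (d6_mult g (rX!l))) = Mf k l) [0..<24]) [0..<24]) Glist"
  by code_simp


lemma chkNM: "list_all (\<lambda>l. list_all (\<lambda>l'. sum_list (map (\<lambda>k. Nf l k * Mf k l') [0..<24]) = (if l = l' then 1 else 0)) [0..<24]) [0..<24]"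
  by code_simp
lemma chkMN: "list_all (\<lambda>k. list_all (\<lambda>k'. sum_list (map (\<lambda>l. Mf k l * Nf l k') [0..<24]) = (if k = k' then 1 else 0)) [0..<24]) [0..<24]"
  by code_simp



lemma main_iso: "perm_lattice_iso D6 (map set HXl) (map set HYl)"
proof (rule group.index_iso[OF group_D6, where n=24 and m=24 and bX="(!) bX" and rX="(!) rX" and cX=cXf
        and bY="(!) bY" and rY="(!) rY" and cY=cYf and M=Mf and N=Nf])
  have lenX: "length HXl = 6" and lenY: "length HYl = 6" by (simp_all add: HXl_def HYl_def)
  show "finite (carrier D6)" by (simp add: carrier_D6)
  show "\<forall>H\<in>set (map set HXl). subgroup H D6" using subgroups_ok by auto
  show "\<forall>H\<in>set (map set HYl). subgroup H D6" using subgroups_ok by auto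
  show "\<forall>k<24. bX!k < length (map set HXl) \<and> rX!k \<in> carrier D6"
    using chkA1 lenX by (simp add: list_all_iff carrier_D6)
  show "\<forall>k<24. bY!k < length (map set HYl) \<and> rY!k \<in> carrier D6"
    using chkB1 lenY by (simp add: list_all_iff carrier_D6)
  show "\<forall>i<length (map set HXl). \<forall>h\<in>carrier D6. cXf i h < 24 \<and> bX!(cXf i h) = i \<and>
      inv\<^bsub>D6\<^esub> (rX!(cXf i h)) \<otimes>\<^bsub>D6\<^esub> h \<in> map set HXl ! i"
  proof (intro allI impI ballI)
    fix i h assume i: "i < length (map set HXl)" and h: "h \<in> carrier D6"
    have c: "cXf i h < 24 \<and> bX!(cXf i h) = i \<and> rX!(cXf i h) \<in> set Glist
       \<and> d6_mult (d6inv (rX!(cXf i h))) h \<in> set (HXl!i)"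
      using chkA2 i h lenX by (simp add: list_all_iff carrier_D6)
    then show "cXf i h < 24 \<and> bX!(cXf i h) = i \<and>
      inv\<^bsub>D6\<^esub> (rX!(cXf i h)) \<otimes>\<^bsub>D6\<^esub> h \<in> map set HXl ! i"
      using i by (simp add: inv_D6 carrier_D6 D6_mult)
  qed
  show "\<forall>i<length (map set HYl). \<forall>h\<in>carrier D6. cYf i h < 24 \<and> bY!(cYf i h) = i \<and>
      inv\<^bsub>D6\<^esub> (rY!(cYf i h)) \<otimes>\<^bsub>D6\<^esub> h \<in> map set HYl ! i"
  proof (intro allI impI ballI)
    fix i h assume i: "i < length (map set HYl)" and h: "h \<in> carrier D6"
    have c: "cYf i h < 24 \<and> bY!(cYf i h) = i \<and> rY!(cYf i h) \<in> set Glist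
       \<and> d6_mult (d6inv (rY!(cYf i h))) h \<in> set (HYl!i)"
      using chkB2 i h lenY by (simp add: list_all_iff carrier_D6)
    then show "cYf i h < 24 \<and> bY!(cYf i h) = i \<and>
      inv\<^bsub>D6\<^esub> (rY!(cYf i h)) \<otimes>\<^bsub>D6\<^esub> h \<in> map set HYl ! i"
      using i by (simp add: inv_D6 carrier_D6 D6_mult)
  qed
  show "\<forall>k<24. \<forall>h\<in>map set HXl ! (bX!k). cXf (bX!k) (rX!k \<otimes>\<^bsub>D6\<^esub> h) = k"
  proof (intro allI impI ballI)
    fix k h assume k: "k < (24::nat)" and h: "h \<in> map set HXl ! (bX!k)"
    have "bX!k < 6" using chkA1 k by (simp add: list_all_iff)
    then show "cXf (bX!k) (rX!k \<otimes>\<^bsub>D6\<^esub> h) = k" using chkA3 k h lenX by (simp add: list_all_iff D6_mult)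
  qed
  show "\<forall>k<24. \<forall>h\<in>map set HYl ! (bY!k). cYf (bY!k) (rY!k \<otimes>\<^bsub>D6\<^esub> h) = k"
  proof (intro allI impI ballI)
    fix k h assume k: "k < (24::nat)" and h: "h \<in> map set HYl ! (bY!k)"
    have "bY!k < 6" using chkB1 k by (simp add: list_all_iff)
    then show "cYf (bY!k) (rY!k \<otimes>\<^bsub>D6\<^esub> h) = k" using chkB3 k h lenY by (simp add: list_all_iff D6_mult)
  qed
  show "\<forall>g\<in>carrier D6. \<forall>k<24. \<forall>l<24. Mf (cYf (bY!k) (g \<otimes>\<^bsub>D6\<^esub> rY!k)) (cXf (bX!l) (g \<otimes>\<^bsub>D6\<^esub> rX!l)) = Mf k l"
    using chkINV by (simp add: list_all_iff carrier_D6 D6_mult)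
  show "\<forall>l<24. \<forall>l'<24. (\<Sum>k<24. Nf l k * Mf k l') = (if l = l' then 1 else 0)"
    using chkNM by (simp add: list_all_iff interv_sum_list_conv_sum_set_nat atLeast0LessThan)
  show "\<forall>k<24. \<forall>k'<24. (\<Sum>l<24. Mf k l * Nf l k') = (if k = k' then 1 else 0)"
    using chkMN by (simp add: list_all_iff interv_sum_list_conv_sum_set_nat atLeast0LessThan)
qed

lemma mon: "monoid D6" using group_D6 by (simp add: group.is_monoid)
lemma sig_pow3: "d6_sigma [^]\<^bsub>D6\<^esub> (3::nat) = (3,False)"
proof -
  have e: "(3::nat) = Suc (Suc (Suc 0))" by simp
  show ?thesis unfolding e
    by (simp only: monoid.nat_pow_Suc[OF mon] monoid.nat_pow_0[OF mon]) (simp add: D6_mult D6_one d6_sigma_def d6_mult_def)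
qed
lemma sig_pow2: "d6_sigma [^]\<^bsub>D6\<^esub> (2::nat) = (2,False)"
proof -
  have e: "(2::nat) = Suc (Suc 0)" by simp
  show ?thesis unfolding e
    by (simp only: monoid.nat_pow_Suc[OF mon] monoid.nat_pow_0[OF mon]) (simp add: D6_mult D6_one d6_sigma_def d6_mult_def)
qed
lemma sig_tau: "d6_sigma \<otimes>\<^bsub>D6\<^esub> d6_tau = (1,True)"
  by (simp add: D6_mult d6_sigma_def d6_tau_def d6_mult_def)

theorem proposition6p7:
  shows "perm_lattice_iso D6
     [ {\<one>\<^bsub>D6\<^esub>},
       generate D6 {d6_sigma [^]\<^bsub>D6\<^esub> (3::nat), d6_tau},
       generate D6 {d6_sigma [^]\<^bsub>D6\<^esub> (3::nat), d6_tau},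
       generate D6 {d6_sigma},
       generate D6 {d6_sigma [^]\<^bsub>D6\<^esub> (2::nat), d6_tau},
       generate D6 {d6_sigma [^]\<^bsub>D6\<^esub> (2::nat), d6_sigma \<otimes>\<^bsub>D6\<^esub> d6_tau} ]
     [ generate D6 {d6_sigma [^]\<^bsub>D6\<^esub> (3::nat)},
       generate D6 {d6_tau},
       generate D6 {d6_sigma \<otimes>\<^bsub>D6\<^esub> d6_tau},
       generate D6 {d6_sigma [^]\<^bsub>D6\<^esub> (2::nat)},
       carrier D6,
       carrier D6 ]"
proof -
  have "[ {\<one>\<^bsub>D6\<^esub>},
       generate D6 {d6_sigma [^]\<^bsub>D6\<^esub> (3::nat), d6_tau},
       generate D6 {d6_sigma [^]\<^bsub>D6\<^esub> (3::nat), d6_tau},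
       generate D6 {d6_sigma},
       generate D6 {d6_sigma [^]\<^bsub>D6\<^esub> (2::nat), d6_tau},
       generate D6 {d6_sigma [^]\<^bsub>D6\<^esub> (2::nat), d6_sigma \<otimes>\<^bsub>D6\<^esub> d6_tau} ] = map set HXl"
    by (simp only: sig_pow3 sig_pow2 sig_tau D6_one)
       (simp add: HXl_def gV4 gC6 gS3a gS3b gC6[unfolded One_nat_def] gS3b[unfolded One_nat_def] d6_sigma_def d6_tau_def)
  moreover have "[ generate D6 {d6_sigma [^]\<^bsub>D6\<^esub> (3::nat)},
       generate D6 {d6_tau},
       generate D6 {d6_sigma \<otimes>\<^bsub>D6\<^esub> d6_tau},
       generate D6 {d6_sigma [^]\<^bsub>D6\<^esub> (2::nat)},
       carrier D6,
       carrier D6 ] = map set HYl"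
    by (simp only: sig_pow3 sig_pow2 sig_tau)
       (simp add: HYl_def gC2a gC2b gC2c gC3 gC2c[unfolded One_nat_def] carrier_D6 d6_sigma_def d6_tau_def)
  ultimately show ?thesis using main_iso by simp
qed


end
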